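(* Let $n=2m+2$, $\omega=\exp(2\pi i/n)$, and let $S$ and $C$ be real $n\times n$ circulant matrices with first rows $(s_1,\ldots,s_n)$ and $(c_1,\ldots,c_n)$ such that $S$, $S+C$ and $S-C$ are entrywise nonnegative. Let $\sigma_1=(\lambda_1,\ldots,\lambda_n)$ and $\sigma_2=(\beta_1,\ldots,\beta_n)$ be their ordered spectra, $\lambda_k=\sum_{j=1}^n s_j\omega^{(k-1)(j-1)}$ and $\beta_k=\sum_{j=1}^n c_j\omega^{(k-1)(j-1)}$ (so $\sigma_1=(\lambda_1,\lambda_2,\lambda_3,\ldots,\overline{\lambda}_3,\overline{\lambda}_2)$ and similarly for $\sigma_2$). Let $t_1,t_2$ be real numbers with $t_1\ge|t_2|$ and fix a sign $\epsilon\in\{+1,-1\}$. Define $$\sigma_{s,t_1}=(\lambda_1+t_1,\lambda_2,\ldots,\lambda_{m+1},\lambda_{m+2}+\epsilon t_1,\lambda_{m+3},\ldots,\lambda_n),$$ $$\sigma_{c,t_2}=(\beta_1+t_2,\beta_2,\ldots,\beta_{m+1},\beta_{m+2}+\epsilon t_2,\beta_{m+3},\ldots,\beta_n).$$ Then there exists a nonnegative permutative $2n\times 2n$ matrix $M$ whose spectrum (counted with multiplicities) is the concatenated list $\sigma_{s,t_1}\cup\sigma_{c,t_2}$.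
   Context: A circulant matrix with first row $(r_1,\ldots,r_n)$ is the matrix whose $i$-th row is the first row cyclically shifted $i-1$ positions to the right. A matrix is permutative if each of its rows is a permutation of its first row (more precisely, it equals $\tau(\mathbf a)$ for some $\mathbf a$ and some $n$-tuple of permutations $\tau$ with $\tau_1=\mathrm{id}$, the $j$-th row being $(a_{\tau_j(1)},\ldots,a_{\tau_j(n)})$). Nonnegative means entrywise nonnegative. *)

theory Defs
  imports "Jordan_Normal_Form.Char_Poly" "HOL-Combinatorics.Permutations"
begin

text \<open>Indices are 0-based. A first row is a function r :: nat => real, only
  r 0, ..., r (n-1) matter.\<close>

definition circulant :: "nat \<Rightarrow> (nat \<Rightarrow> real) \<Rightarrow> real mat" where
  "circulant n r = mat n n (\<lambda>(i, j). r (nat ((int j - int i) mod int n)))"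

definition nonneg_mat :: "real mat \<Rightarrow> bool" where
  "nonneg_mat M \<longleftrightarrow> (\<forall>i < dim_row M. \<forall>j < dim_col M. M $$ (i, j) \<ge> 0)"

definition permutative :: "real mat \<Rightarrow> bool" where
  "permutative M \<longleftrightarrow> dim_row M = dim_col M \<and>
     (\<forall>i < dim_row M. \<exists>\<tau>. \<tau> permutes {..<dim_col M} \<and> (i = 0 \<longrightarrow> \<tau> = id) \<and>
        (\<forall>k < dim_col M. M $$ (i, k) = M $$ (0, \<tau> k)))"

definition has_spectrum :: "real mat \<Rightarrow> complex list \<Rightarrow> bool" where
  "has_spectrum M xs \<longleftrightarrow>
     char_poly (map_mat complex_of_real M) = (\<Prod>\<mu>\<leftarrow>xs. [:- \<mu>, 1:])"

definition circ_eig :: "nat \<Rightarrow> (nat \<Rightarrow> real) \<Rightarrow> nat \<Rightarrow> complex" where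
  "circ_eig n r k = (\<Sum>j<n. complex_of_real (r j) *
      cis (2 * pi / real n) ^ (k * j))"

end

theory Submission
  imports Defs "HOL-Library.Real_Mod"
begin


definition w :: "nat \<Rightarrow> complex" where "w n = cis (2 * pi / real n)"

lemma w_pow: "w n ^ p = cis (2 * pi * real p / real n)"
  unfolding w_def DeMoivre by (simp add: field_simps)

lemma w_n: "0 < n \<Longrightarrow> w n ^ n = 1"
  unfolding w_pow by simp

lemma w_mod: assumes "0 < n" shows "w n ^ (p mod n) = w n ^ p"
proof -
  have "w n ^ p = w n ^ (n * (p div n) + p mod n)" by simp
  also have "\<dots> = w n ^ (p mod n)" unfolding power_add power_mult w_n[OF assms] by simp
  finally show ?thesis by simp
qed

lemma w_eq_1: assumes "0 < n" shows "w n ^ p = 1 \<longleftrightarrow> n dvd p"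
proof
  assume "w n ^ p = 1"
  then obtain k where k: "2 * pi * real p / real n = of_int k * (2 * pi)" unfolding w_pow cis_eq_1_iff by blast
  hence "real p = of_int k * real n" using assms by (simp add: field_simps)
  hence "int p = k * int n" by (metis of_int_eq_iff of_int_mult of_int_of_nat_eq)
  thus "n dvd p" by (metis dvd_triv_right int_dvd_int_iff)
next
  assume "n dvd p" then obtain k where "p = n * k" by blast
  thus "w n ^ p = 1" by (simp add: power_mult w_n assms)
qed

lemma w_geo: assumes "0 < n" shows "(\<Sum>l<n. w n ^ (p * l)) = (if n dvd p then of_nat n else 0)"
proof (cases "n dvd p")
  case True
  hence "w n ^ p = 1" using w_eq_1 assms by blast
  thus ?thesis using True by (simp add: power_mult)
next
  case False
  hence ne: "w n ^ p \<noteq> 1" using w_eq_1 assms by blast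
  have "(\<Sum>l<n. w n ^ (p * l)) = (\<Sum>l<n. (w n ^ p) ^ l)" by (simp add: power_mult)
  also have "\<dots> = ((w n ^ p) ^ n - 1) / (w n ^ p - 1)" using geometric_sum[OF ne] by simp
  also have "(w n ^ p) ^ n = 1" by (metis power_mult power_mult_distrib mult.commute w_n assms power_one)
  finally show ?thesis using False by simp
qed


definition d :: "nat \<Rightarrow> nat \<Rightarrow> nat \<Rightarrow> nat" where "d n i j = (j + (n - i mod n)) mod n"

lemma d_lt: "0 < n \<Longrightarrow> d n i j < n" unfolding d_def by simp

lemma d_aux: fixes n i x :: nat assumes "0 < n" shows "x + (n - i mod n) + i = x + n + n * (i div n)"
proof -
  have "i mod n < n" using assms by simp
  hence r: "i mod n \<le> n" by simp
  have "i = n * (i div n) + i mod n" by simp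
  thus ?thesis using r by linarith
qed

lemma d_inv1: assumes "0 < n" shows "(d n i a + i) mod n = a mod n"
proof -
  have "(d n i a + i) mod n = (a + (n - i mod n) + i) mod n" unfolding d_def by (simp add: mod_add_left_eq)
  also have "\<dots> = (a + n + n * (i div n)) mod n" by (simp only: d_aux[OF assms])
  also have "\<dots> = a mod n" by simp
  finally show ?thesis .
qed

lemma d_inv2: assumes "0 < n" "b < n" shows "d n i ((b + i) mod n) = b"
proof -
  have eq: "b + i + (n - i mod n) = b + n + n * (i div n)" using d_aux[OF assms(1), of b i] by linarith
  have "d n i ((b + i) mod n) = (b + i + (n - i mod n)) mod n" unfolding d_def by (simp add: mod_add_left_eq)
  also have "\<dots> = (b + n + n * (i div n)) mod n" by (simp only: eq)
  also have "\<dots> = b" using assms by simp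
  finally show ?thesis .
qed

lemma d_shift: "d n i (j + n) = d n i j"
proof -
  have "j + n + (n - i mod n) = (j + (n - i mod n)) + n" by simp
  thus ?thesis unfolding d_def by (simp only: mod_add_self2)
qed
lemma d_zero: "d n 0 j = j mod n" unfolding d_def by simp

lemma w_mult_mod: assumes "0 < n" shows "w n ^ (k * (x mod n)) = w n ^ (k * x)"
  by (metis assms mod_mult_right_eq w_mod)

lemma w_shift: assumes "0 < n" shows "w n ^ (k * (x + n)) = w n ^ (k * x)"
  by (metis assms mod_add_self2 w_mult_mod)

lemma shift_sum: assumes n: "0 < n"
  shows "(\<Sum>j<n. f (d n i j) * w n ^ (k * j)) = w n ^ (k * i) * (\<Sum>l<n. f l * w n ^ (k * l))"
proof -
  have "(\<Sum>j<n. f (d n i j) * w n ^ (k * j)) = (\<Sum>l<n. f l * w n ^ (k * ((l + i) mod n)))"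
  proof (rule sum.reindex_bij_witness[where i="\<lambda>l. (l + i) mod n" and j="d n i"])
    fix a assume "a \<in> {..<n}" thus "(d n i a + i) mod n = a" using d_inv1[OF n] by simp
  next
    fix a assume "a \<in> {..<n}" thus "d n i a \<in> {..<n}" using d_lt[OF n] by simp
  next
    fix b assume "b \<in> {..<n}" thus "d n i ((b + i) mod n) = b" using d_inv2[OF n] by simp
  next
    fix b assume "b \<in> {..<n}" thus "(b + i) mod n \<in> {..<n}" using n by simp
  next
    fix a assume "a \<in> {..<n}" thus "f (d n i a) * w n ^ (k * ((d n i a + i) mod n)) = f (d n i a) * w n ^ (k * a)"
      using d_inv1[OF n] by simp
  qed
  also have "\<dots> = (\<Sum>l<n. w n ^ (k * i) * (f l * w n ^ (k * l)))"
  proof (rule sum.cong[OF refl])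
    fix l
    have "w n ^ (k * ((l + i) mod n)) = w n ^ (k * (l + i))" by (rule w_mult_mod[OF n])
    also have "\<dots> = w n ^ (k * l) * w n ^ (k * i)" by (simp only: distrib_left power_add)
    finally show "f l * w n ^ (k * ((l + i) mod n)) = w n ^ (k * i) * (f l * w n ^ (k * l))" by simp
  qed
  finally show ?thesis by (simp add: sum_distrib_left)
qed

lemma sum_split2: "(\<Sum>j<2*(n::nat). f j) = (\<Sum>j<n. f j) + (\<Sum>j<n. f (j + n))"
proof -
  have "(\<Sum>j<2*n. f j) = (\<Sum>j\<in>{0..<n+n}. f j)" by (simp add: atLeast0LessThan mult_2)
  also have "\<dots> = (\<Sum>j\<in>{0..<n}. f j) + (\<Sum>j\<in>{n..<n+n}. f j)"
    using sum.atLeastLessThan_concat[of 0 n "n+n" f] by simp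
  also have "(\<Sum>j\<in>{n..<n+n}. f j) = (\<Sum>j\<in>{0..<n}. f (j + n))" using sum.shift_bounds_nat_ivl[of f 0 n n] by simp
  finally show ?thesis by (simp add: atLeast0LessThan)
qed

lemma mat_mult_entry: assumes "i < N" "j < N"
  shows "(mat N N f * mat N N g) $$ (i, j) = (\<Sum>k<N. f (i, k) * g (k, j))"
  using assms by (simp add: scalar_prod_def atLeast0LessThan)



definition sg :: "nat \<Rightarrow> nat \<Rightarrow> nat \<Rightarrow> complex" where
  "sg n K j = (if n \<le> K \<and> n \<le> j then -1 else 1)"
definition sig :: "nat \<Rightarrow> nat \<Rightarrow> complex" where
  "sig n K = (if n \<le> K then -1 else 1)"

lemma sg_low: "j < n \<Longrightarrow> sg n K j = 1" unfolding sg_def by simp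
lemma sg_high: "sg n K (j + n) = sig n K" unfolding sg_def sig_def by simp

definition Qm :: "nat \<Rightarrow> complex mat" where
  "Qm n = mat (2*n) (2*n) (\<lambda>(j,K). w n ^ ((K mod n) * j) * sg n K j)"
definition Qi :: "nat \<Rightarrow> complex mat" where
  "Qi n = mat (2*n) (2*n) (\<lambda>(K,j). w n ^ ((n - K mod n) * j) * sg n K j / of_nat (2*n))"

lemma w_mul: "w n ^ (a*x) * w n ^ (b*x) = w n ^ ((a+b)*x)"
  by (simp add: add_mult_distrib power_add)

lemma sum_aux: "(\<Sum>j\<in>A. x j / N) + (\<Sum>j\<in>A. c * (x j / N)) = (1 + c) * (\<Sum>j\<in>A. x j) / (N::complex)"
proof -
  have 1: "(\<Sum>j\<in>A. c * (x j / N)) = c * (\<Sum>j\<in>A. x j) / N" by (simp add: sum_distrib_left sum_divide_distrib)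
  have 2: "(\<Sum>j\<in>A. x j / N) = (\<Sum>j\<in>A. x j) / N" by (simp add: sum_divide_distrib)
  show ?thesis unfolding 1 2 by (simp add: ring_distribs add_divide_distrib)
qed

lemma QiQm_entry: assumes n: "0 < n" and K: "K < 2*n" and L: "L < 2*n"
  shows "(Qi n * Qm n) $$ (K, L) = (1 + sig n K * sig n L) * (\<Sum>j<n. w n ^ ((n - K mod n + L mod n) * j)) / of_nat (2*n)"
proof -
  let ?f = "\<lambda>j. w n ^ ((n - K mod n) * j) * sg n K j / of_nat (2*n) * (w n ^ ((L mod n) * j) * sg n L j)"
  have "(Qi n * Qm n) $$ (K, L) = (\<Sum>j<2*n. ?f j)"
    unfolding Qi_def Qm_def using K L by (simp add: scalar_prod_def atLeast0LessThan)
  also have "\<dots> = (\<Sum>j<n. ?f j) + (\<Sum>j<n. ?f (j + n))" by (rule sum_split2)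
  also have "(\<Sum>j<n. ?f j) = (\<Sum>j<n. w n ^ ((n - K mod n + L mod n) * j) / of_nat (2*n))"
    by (rule sum.cong[OF refl]) (simp add: sg_low w_mul)
  also have "(\<Sum>j<n. ?f (j + n)) = (\<Sum>j<n. sig n K * sig n L * (w n ^ ((n - K mod n + L mod n) * j) / of_nat (2*n)))"
    by (rule sum.cong[OF refl]) (simp add: sg_high w_shift[OF n] w_mul)
  finally show ?thesis by (simp only: sum_aux)
qed

lemma dvd_nkl: fixes n k l :: nat assumes "0 < n" "k < n" "l < n" shows "n dvd (n - k + l) \<longleftrightarrow> k = l"
proof
  assume "n dvd (n - k + l)"
  then obtain q where q: "n - k + l = n * q" by blast
  have "0 < n * q" "n * q < n * 2" using q assms by linarith+
  hence "0 < q" "q < 2" using assms by simp_all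
  hence "q = 1" by linarith
  thus "k = l" using q assms by simp
next
  assume "k = l" thus "n dvd (n - k + l)" using assms by simp
qed

lemma QiQm: assumes n: "0 < n" shows "Qi n * Qm n = 1\<^sub>m (2*n)"
proof (rule eq_matI)
  show "dim_row (Qi n * Qm n) = dim_row (1\<^sub>m (2*n))" "dim_col (Qi n * Qm n) = dim_col (1\<^sub>m (2*n))"
    unfolding Qi_def Qm_def by simp_all
  fix K L assume "K < dim_row (1\<^sub>m (2 * n))" "L < dim_col (1\<^sub>m (2 * n))"
  hence K: "K < 2*n" and L: "L < 2*n" by simp_all
  have geo: "(\<Sum>j<n. w n ^ ((n - K mod n + L mod n) * j)) = (if K mod n = L mod n then of_nat n else 0)"
    using w_geo[OF n] dvd_nkl[OF n] n by simp
  have eqK: "K = L \<longleftrightarrow> K mod n = L mod n \<and> (n \<le> K) = (n \<le> L)"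
  proof
    assume h: "K mod n = L mod n \<and> (n \<le> K) = (n \<le> L)"
    have "K = (if n \<le> K then n else 0) + K mod n" "L = (if n \<le> L then n else 0) + L mod n"
      using K L by (auto simp: mod_if le_mod_geq)
    thus "K = L" using h by metis
  qed simp
  have "(Qi n * Qm n) $$ (K, L) = (1 + sig n K * sig n L) * (if K mod n = L mod n then of_nat n else 0) / of_nat (2*n)"
    unfolding QiQm_entry[OF n K L] geo ..
  also have "\<dots> = 1\<^sub>m (2 * n) $$ (K, L)"
  proof (cases "K = L")
    case True thus ?thesis using n L unfolding sig_def by (simp add: field_simps)
  next
    case False
    hence "K mod n \<noteq> L mod n \<or> sig n K * sig n L = -1" using eqK unfolding sig_def by auto
    thus ?thesis using False K L by auto
  qed
  finally show "(Qi n * Qm n) $$ (K, L) = 1\<^sub>m (2 * n) $$ (K, L)" .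
qed

definition Mm :: "nat \<Rightarrow> (nat \<Rightarrow> real) \<Rightarrow> (nat \<Rightarrow> real) \<Rightarrow> real mat" where
  "Mm n a b = mat (2*n) (2*n) (\<lambda>(i,j). if (i < n) = (j < n) then a (d n i j) else b (d n i j))"
definition Ec :: "nat \<Rightarrow> (nat \<Rightarrow> complex) \<Rightarrow> nat \<Rightarrow> complex" where
  "Ec n f k = (\<Sum>l<n. f l * w n ^ (k * l))"
definition mu :: "nat \<Rightarrow> (nat \<Rightarrow> real) \<Rightarrow> (nat \<Rightarrow> real) \<Rightarrow> nat \<Rightarrow> complex" where
  "mu n a b K = Ec n (\<lambda>l. complex_of_real (a l)) (K mod n) + sig n K * Ec n (\<lambda>l. complex_of_real (b l)) (K mod n)"
definition Dm :: "nat \<Rightarrow> (nat \<Rightarrow> real) \<Rightarrow> (nat \<Rightarrow> real) \<Rightarrow> complex mat" where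
  "Dm n a b = mat (2*n) (2*n) (\<lambda>(i,j). if i = j then mu n a b i else 0)"

lemma Ec_lin: "Ec n (\<lambda>l. f l + c * g l) k = Ec n f k + c * Ec n g k"
  unfolding Ec_def by (simp add: sum.distrib sum_distrib_left algebra_simps)

lemma sig_sq: "sig n K * sig n K = 1" unfolding sig_def by simp

lemma MQ_entry: assumes n: "0 < n" and i: "i < 2*n" and K: "K < 2*n"
  shows "(map_mat complex_of_real (Mm n a b) * Qm n) $$ (i, K) = (Qm n * Dm n a b) $$ (i, K)"
proof -
  define A where "A = (\<lambda>l. complex_of_real ((if i < n then a else b) l))"
  define B where "B = (\<lambda>l. complex_of_real ((if i < n then b else a) l))"
  let ?k = "K mod n"
  let ?f = "\<lambda>j. complex_of_real (if (i < n) = (j < n) then a (d n i j) else b (d n i j)) * (w n ^ (?k * j) * sg n K j)"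
  have "(map_mat complex_of_real (Mm n a b) * Qm n) $$ (i, K) = (\<Sum>j<2*n. ?f j)"
    unfolding Mm_def Qm_def using i K by (simp add: scalar_prod_def atLeast0LessThan)
  also have "\<dots> = (\<Sum>j<n. ?f j) + (\<Sum>j<n. ?f (j + n))" by (rule sum_split2)
  also have "(\<Sum>j<n. ?f j) = (\<Sum>j<n. A (d n i j) * w n ^ (?k * j))"
    by (rule sum.cong[OF refl]) (simp add: sg_low A_def)
  also have "(\<Sum>j<n. ?f (j + n)) = (\<Sum>j<n. sig n K * B (d n i j) * w n ^ (?k * j))"
    by (rule sum.cong[OF refl]) (auto simp add: sg_high B_def d_shift w_shift[OF n])
  also have "(\<Sum>j<n. A (d n i j) * w n ^ (?k * j)) + (\<Sum>j<n. sig n K * B (d n i j) * w n ^ (?k * j))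
     = (\<Sum>j<n. (\<lambda>l. A l + sig n K * B l) (d n i j) * w n ^ (?k * j))"
    by (simp add: sum.distrib algebra_simps)
  also have "\<dots> = w n ^ (?k * i) * Ec n (\<lambda>l. A l + sig n K * B l) ?k"
    unfolding Ec_def by (rule shift_sum[OF n])
  also have "\<dots> = w n ^ (?k * i) * (Ec n A ?k + sig n K * Ec n B ?k)" by (simp only: Ec_lin)
  finally have L: "(map_mat complex_of_real (Mm n a b) * Qm n) $$ (i, K) = w n ^ (?k * i) * (Ec n A ?k + sig n K * Ec n B ?k)" .
  have "(Qm n * Dm n a b) $$ (i, K) = (\<Sum>j<2*n. w n ^ ((j mod n) * i) * sg n j i * (if j = K then mu n a b j else 0))"
    unfolding Dm_def Qm_def using i K by (simp add: scalar_prod_def atLeast0LessThan)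
  also have "\<dots> = (\<Sum>j<2*n. if j = K then w n ^ (?k * i) * sg n K i * mu n a b K else 0)"
    by (rule sum.cong[OF refl]) simp
  also have "\<dots> = w n ^ (?k * i) * sg n K i * mu n a b K" using K by (simp add: sum.delta)
  finally have R: "(Qm n * Dm n a b) $$ (i, K) = w n ^ (?k * i) * sg n K i * mu n a b K" .
  show ?thesis
  proof (cases "i < n")
    case True thus ?thesis unfolding L R A_def B_def mu_def by (simp add: sg_low)
  next
    case False
    hence "sg n K i = sig n K" unfolding sg_def sig_def by simp
    thus ?thesis unfolding L R A_def B_def mu_def using False sig_sq[of n K]
      by (simp add: algebra_simps)
  qed
qed

lemma MQ: assumes n: "0 < n" shows "map_mat complex_of_real (Mm n a b) * Qm n = Qm n * Dm n a b"
proof (rule eq_matI)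
  fix i K assume "i < dim_row (Qm n * Dm n a b)" "K < dim_col (Qm n * Dm n a b)"
  hence "i < 2*n" "K < 2*n" by (simp_all add: Qm_def Dm_def)
  thus "(map_mat complex_of_real (Mm n a b) * Qm n) $$ (i, K) = (Qm n * Dm n a b) $$ (i, K)" by (rule MQ_entry[OF n])
qed (simp_all add: Qm_def Dm_def Mm_def)

lemma charpoly_Mm: assumes n: "0 < n"
  shows "char_poly (map_mat complex_of_real (Mm n a b)) = (\<Prod>K\<leftarrow>[0..<2*n]. [:- mu n a b K, 1:])"
proof -
  let ?M = "map_mat complex_of_real (Mm n a b)"
  have cM: "?M \<in> carrier_mat (2*n) (2*n)" and cQ: "Qm n \<in> carrier_mat (2*n) (2*n)"
    and cQi: "Qi n \<in> carrier_mat (2*n) (2*n)" and cD: "Dm n a b \<in> carrier_mat (2*n) (2*n)"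
    unfolding Mm_def Qm_def Qi_def Dm_def by auto
  have QiQ: "Qi n * Qm n = 1\<^sub>m (2*n)" by (rule QiQm[OF n])
  have QQi: "Qm n * Qi n = 1\<^sub>m (2*n)" by (rule mat_mult_left_right_inverse[OF cQi cQ QiQ])
  have "?M = ?M * (Qm n * Qi n)" using cM by (simp add: QQi)
  also have "\<dots> = (?M * Qm n) * Qi n" using cM cQ cQi by (simp add: assoc_mult_mat)
  also have "\<dots> = Qm n * Dm n a b * Qi n" by (simp add: MQ[OF n])
  finally have eq: "?M = Qm n * Dm n a b * Qi n" .
  have "similar_mat_wit ?M (Dm n a b) (Qm n) (Qi n)"
    unfolding similar_mat_wit_def Let_def using cM cQ cQi cD QQi QiQ eq by auto
  hence "similar_mat ?M (Dm n a b)" unfolding similar_mat_def by blast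
  hence "char_poly ?M = char_poly (Dm n a b)" by (rule char_poly_similar)
  also have "\<dots> = (\<Prod>x\<leftarrow>diag_mat (Dm n a b). [:- x, 1:])"
    by (rule char_poly_upper_triangular[OF cD]) (simp add: upper_triangular_def Dm_def)
  also have "diag_mat (Dm n a b) = map (mu n a b) [0..<2*n]" unfolding diag_mat_def Dm_def by simp
  finally show ?thesis by (simp add: comp_def)
qed

lemma nonneg_Mm: assumes "\<And>l. l < n \<Longrightarrow> a l \<ge> 0" "\<And>l. l < n \<Longrightarrow> b l \<ge> 0" "0 < n"
  shows "nonneg_mat (Mm n a b)"
  unfolding nonneg_mat_def Mm_def using assms d_lt[OF assms(3)] by auto

lemma permutative_Mm: assumes n: "0 < n" shows "permutative (Mm n a b)"
  unfolding permutative_def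
proof (intro conjI allI impI)
  show "dim_row (Mm n a b) = dim_col (Mm n a b)" unfolding Mm_def by simp
  fix i assume "i < dim_row (Mm n a b)"
  hence i: "i < 2*n" unfolding Mm_def by simp
  define \<tau> where "\<tau> = (\<lambda>k. if k < 2*n then (if (k < n) = (i < n) then 0 else n) + d n i k else k)"
  have dl: "\<And>k. d n i k < n" using d_lt[OF n] by blast
  have tlt: "\<tau> k < 2*n" if "k < 2*n" for k unfolding \<tau>_def using dl[of k] that by auto
  have thalf: "\<And>k. k < 2*n \<Longrightarrow> (\<tau> k < n) = ((k < n) = (i < n))" unfolding \<tau>_def using dl by auto
  have tmod: "\<And>k. k < 2*n \<Longrightarrow> \<tau> k mod n = d n i k" unfolding \<tau>_def using dl by auto
  have perm: "\<tau> permutes {..<dim_col (Mm n a b)}"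
  proof (rule inj_imp_permutes)
    show "inj_on \<tau> {..<dim_col (Mm n a b)}"
    proof (rule inj_onI)
      fix x y assume x: "x \<in> {..<dim_col (Mm n a b)}" and y: "y \<in> {..<dim_col (Mm n a b)}" and e: "\<tau> x = \<tau> y"
      hence x': "x < 2*n" and y': "y < 2*n" unfolding Mm_def by auto
      have h: "(x < n) = (y < n)" using thalf[OF x'] thalf[OF y'] e by auto
      have "d n i x = d n i y" using tmod[OF x'] tmod[OF y'] e by simp
      hence "(d n i x + i) mod n = (d n i y + i) mod n" by simp
      hence m: "x mod n = y mod n" using d_inv1[OF n] by simp
      have "x = (if n \<le> x then n else 0) + x mod n" "y = (if n \<le> y then n else 0) + y mod n"
        using x' y' by (auto simp: mod_if le_mod_geq)
      thus "x = y" using h m by (metis not_le)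
    qed
  next
    show "finite {..<dim_col (Mm n a b)}" by simp
  next
    fix x assume "x \<in> {..<dim_col (Mm n a b)}"
    thus "\<tau> x \<in> {..<dim_col (Mm n a b)}" using tlt unfolding Mm_def by auto
  next
    fix x assume "x \<notin> {..<dim_col (Mm n a b)}"
    thus "\<tau> x = x" unfolding \<tau>_def Mm_def by auto
  qed
  have tid: "i = 0 \<longrightarrow> \<tau> = id"
  proof
    assume i0: "i = 0"
    show "\<tau> = id"
    proof
      fix k show "\<tau> k = id k"
        unfolding \<tau>_def i0 d_zero using n by (auto simp: le_mod_geq)
    qed
  qed
  have ent: "Mm n a b $$ (i, k) = Mm n a b $$ (0, \<tau> k)" if "k < dim_col (Mm n a b)" for k
  proof -
  from that have k: "k < 2*n" unfolding Mm_def by simp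
  have "Mm n a b $$ (0, \<tau> k) = (if (0 < n) = (\<tau> k < n) then a (d n 0 (\<tau> k)) else b (d n 0 (\<tau> k)))"
    unfolding Mm_def using n tlt[OF k] by simp
  also have "\<dots> = (if (i < n) = (k < n) then a (d n i k) else b (d n i k))"
    unfolding d_zero tmod[OF k] using thalf[OF k] n by auto
  also have "\<dots> = Mm n a b $$ (i, k)" unfolding Mm_def using i k by simp
  finally show "Mm n a b $$ (i, k) = Mm n a b $$ (0, \<tau> k)" by simp
  qed
  show "\<exists>\<tau>. \<tau> permutes {..<dim_col (Mm n a b)} \<and> (i = 0 \<longrightarrow> \<tau> = id) \<and>
        (\<forall>k < dim_col (Mm n a b). Mm n a b $$ (i, k) = Mm n a b $$ (0, \<tau> k))"
    using perm tid ent by blast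
qed



lemma circ_eig_Ec: "circ_eig n r k = Ec n (\<lambda>l. complex_of_real (r l)) k"
  unfolding circ_eig_def Ec_def w_def ..

lemma w_half: "w (2*m+2) ^ (m+1) = -1"
proof -
  have "w (2*m+2) ^ (m+1) = cis (2 * pi * real (m+1) / real (2*m+2))" by (rule w_pow)
  also have "2 * pi * real (m+1) / real (2*m+2) = pi" by (simp add: field_simps)
  finally show ?thesis by simp
qed

lemma Ec_ph: assumes k: "k < 2*m+2"
  shows "Ec (2*m+2) (\<lambda>l. complex_of_real (1 + e * (-1)^l)) k
     = of_nat (2*m+2) * ((if k = 0 then 1 else 0) + of_real e * (if k = m + 1 then 1 else 0))"
proof -
  let ?n = "2*m+2"
  have n: "0 < ?n" by simp
  have t: "complex_of_real (1 + e * (-1)^l) * w ?n ^ (k*l) = w ?n ^ (k*l) + of_real e * w ?n ^ ((k+m+1)*l)" for l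
  proof -
    have ee: "(k+m+1)*l = k*l + (m+1)*l" by (simp add: algebra_simps)
    have "w ?n ^ ((k+m+1)*l) = w ?n ^ (k*l) * (w ?n ^ (m+1)) ^ l"
      unfolding ee power_add power_mult ..
    thus ?thesis unfolding w_half by (simp add: algebra_simps)
  qed
  have "Ec ?n (\<lambda>l. complex_of_real (1 + e * (-1)^l)) k = (\<Sum>l<?n. w ?n ^ (k*l)) + of_real e * (\<Sum>l<?n. w ?n ^ ((k+m+1)*l))"
    unfolding Ec_def t sum.distrib sum_distrib_left ..
  also have "(\<Sum>l<?n. w ?n ^ (k*l)) = (if ?n dvd k then of_nat ?n else 0)" by (rule w_geo[OF n])
  also have "(\<Sum>l<?n. w ?n ^ ((k+m+1)*l)) = (if ?n dvd (k+m+1) then of_nat ?n else 0)" by (rule w_geo[OF n])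
  also have "?n dvd k \<longleftrightarrow> k = 0" using k by (auto dest: dvd_imp_le)
  also have "?n dvd (k+m+1) \<longleftrightarrow> k = m + 1"
  proof
    assume "?n dvd (k+m+1)"
    then obtain q where q: "k+m+1 = ?n * q" by blast
    have h1: "0 < ?n * q" and h2: "?n * q < ?n * 2" unfolding q[symmetric] using k by simp_all
    have "0 < q" using h1 nat_0_less_mult_iff by blast
    moreover have "q < 2" using h2 mult_less_cancel1 by blast
    ultimately have "q = 1" by linarith
    thus "k = m+1" using q by simp
  next
    assume "k = m + 1"
    hence "k + m + 1 = 2*m+2" by simp
    thus "?n dvd (k+m+1)" by (simp only: dvd_refl)
  qed
  finally show ?thesis by simp
qed

lemma Ec_eig: assumes k: "k < 2*m+2"
  shows "Ec (2*m+2) (\<lambda>l. complex_of_real (r l + t / real (2*m+2) * (1 + e * (-1)^l))) k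
    = circ_eig (2*m+2) r k + complex_of_real (if k = 0 then t else if k = m + 1 then e * t else 0)"
proof -
  let ?n = "2*m+2"
  have "Ec ?n (\<lambda>l. complex_of_real (r l + t / real ?n * (1 + e * (-1)^l))) k
     = Ec ?n (\<lambda>l. complex_of_real (r l) + complex_of_real (t / real ?n) * complex_of_real (1 + e * (-1)^l)) k"
    by simp
  also have "\<dots> = circ_eig ?n r k + complex_of_real (t / real ?n) * Ec ?n (\<lambda>l. complex_of_real (1 + e * (-1)^l)) k"
    unfolding Ec_lin circ_eig_Ec ..
  also have "\<dots> = circ_eig ?n r k + complex_of_real (if k = 0 then t else if k = m + 1 then e * t else 0)"
  proof -
    have tn: "complex_of_real (t / real ?n) * (of_nat ?n * X) = of_real t * X" for X
    proof -
      have "complex_of_real (t / real ?n) * (of_nat ?n * X) = complex_of_real (t / real ?n * real ?n) * X"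
        by (simp only: of_real_mult of_real_of_nat_eq mult.assoc)
      also have "t / real ?n * real ?n = t" by simp
      finally show ?thesis .
    qed
    show ?thesis unfolding Ec_ph[OF k] tn by auto
  qed
  finally show ?thesis .
qed

theorem theorem9:
  fixes m :: nat and s c :: "nat \<Rightarrow> real" and t1 t2 \<epsilon> :: real
  defines "n \<equiv> 2 * m + 2"
  assumes "nonneg_mat (circulant n s)"
    and "nonneg_mat (circulant n s + circulant n c)"
    and "nonneg_mat (circulant n s - circulant n c)"
    and "t1 \<ge> \<bar>t2\<bar>"
    and "\<epsilon> = 1 \<or> \<epsilon> = -1"
  shows "\<exists>M. M \<in> carrier_mat (2 * n) (2 * n) \<and> nonneg_mat M \<and> permutative M \<and>
    has_spectrum M
      (map (\<lambda>k. circ_eig n s k + complex_of_real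
                 (if k = 0 then t1 else if k = m + 1 then \<epsilon> * t1 else 0)) [0..<n]
       @ map (\<lambda>k. circ_eig n c k + complex_of_real
                 (if k = 0 then t2 else if k = m + 1 then \<epsilon> * t2 else 0)) [0..<n])"
proof -
  define ph :: "nat \<Rightarrow> real" where "ph = (\<lambda>l. 1 + \<epsilon> * (-1)^l)"
  define a where "a = (\<lambda>l. ((s l + c l) + (t1 + t2) / real n * ph l) / 2)"
  define b where "b = (\<lambda>l. ((s l - c l) + (t1 - t2) / real n * ph l) / 2)"
  have n0: "0 < n" unfolding n_def by simp
  have ph0: "ph l \<ge> 0" for l using \<open>\<epsilon> = 1 \<or> \<epsilon> = -1\<close> by (cases "even l") (auto simp: ph_def)
  have sc: "s l + c l \<ge> 0" if "l < n" for l
  proof -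
    have "(circulant n s + circulant n c) $$ (0, l) \<ge> 0"
      using \<open>nonneg_mat (circulant n s + circulant n c)\<close> that n0 unfolding nonneg_mat_def circulant_def by auto
    thus ?thesis using that n0 unfolding circulant_def by simp
  qed
  have sc': "s l - c l \<ge> 0" if "l < n" for l
  proof -
    have "(circulant n s - circulant n c) $$ (0, l) \<ge> 0"
      using \<open>nonneg_mat (circulant n s - circulant n c)\<close> that n0 unfolding nonneg_mat_def circulant_def by auto
    thus ?thesis using that n0 unfolding circulant_def by simp
  qed
  have tt: "t1 + t2 \<ge> 0" "t1 - t2 \<ge> 0" using \<open>t1 \<ge> \<bar>t2\<bar>\<close> by linarith+
  have a0: "a l \<ge> 0" if "l < n" for l unfolding a_def using sc[OF that] tt ph0[of l] n0 by simp
  have b0: "b l \<ge> 0" if "l < n" for l unfolding b_def using sc'[OF that] tt ph0[of l] n0 by simp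
  define M where "M = Mm n a b"
  have eqab1: "a l + b l = s l + t1 / real n * ph l" for l
    unfolding a_def b_def using n0 by (simp add: field_simps)
  have eqab2: "a l - b l = c l + t2 / real n * ph l" for l
    unfolding a_def b_def using n0 by (simp add: field_simps)
  have ab1: "(\<lambda>l. complex_of_real (a l) + 1 * complex_of_real (b l)) = (\<lambda>l. complex_of_real (s l + t1 / real (2*m+2) * (1 + \<epsilon> * (-1)^l)))"
  proof (rule ext)
    fix l
    have "complex_of_real (a l) + 1 * complex_of_real (b l) = complex_of_real (a l + b l)" by simp
    also have "\<dots> = complex_of_real (s l + t1 / real (2*m+2) * (1 + \<epsilon> * (-1)^l))"
      by (simp only: eqab1 n_def ph_def)
    finally show "complex_of_real (a l) + 1 * complex_of_real (b l) = complex_of_real (s l + t1 / real (2*m+2) * (1 + \<epsilon> * (-1)^l))" .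
  qed
  have ab2: "(\<lambda>l. complex_of_real (a l) + (-1) * complex_of_real (b l)) = (\<lambda>l. complex_of_real (c l + t2 / real (2*m+2) * (1 + \<epsilon> * (-1)^l)))"
  proof (rule ext)
    fix l
    have "complex_of_real (a l) + (-1) * complex_of_real (b l) = complex_of_real (a l - b l)" by simp
    also have "\<dots> = complex_of_real (c l + t2 / real (2*m+2) * (1 + \<epsilon> * (-1)^l))"
      by (simp only: eqab2 n_def ph_def)
    finally show "complex_of_real (a l) + (-1) * complex_of_real (b l) = complex_of_real (c l + t2 / real (2*m+2) * (1 + \<epsilon> * (-1)^l))" .
  qed
  have mu1: "mu n a b k = circ_eig n s k + complex_of_real (if k = 0 then t1 else if k = m + 1 then \<epsilon> * t1 else 0)" if "k < n" for k
  proof -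
    have "mu n a b k = Ec n (\<lambda>l. complex_of_real (a l) + 1 * complex_of_real (b l)) k"
      unfolding mu_def Ec_lin using that by (simp add: sig_def)
    also have "\<dots> = circ_eig n s k + complex_of_real (if k = 0 then t1 else if k = m + 1 then \<epsilon> * t1 else 0)"
      unfolding ab1 n_def by (rule Ec_eig) (use that n_def in simp)
    finally show ?thesis .
  qed
  have mu2: "mu n a b (k + n) = circ_eig n c k + complex_of_real (if k = 0 then t2 else if k = m + 1 then \<epsilon> * t2 else 0)" if "k < n" for k
  proof -
    have "mu n a b (k + n) = Ec n (\<lambda>l. complex_of_real (a l) + (-1) * complex_of_real (b l)) k"
      unfolding mu_def Ec_lin using that by (simp add: sig_def)
    also have "\<dots> = circ_eig n c k + complex_of_real (if k = 0 then t2 else if k = m + 1 then \<epsilon> * t2 else 0)"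
      unfolding ab2 n_def by (rule Ec_eig) (use that n_def in simp)
    finally show ?thesis .
  qed
  have upt: "[0..<2*n] = [0..<n] @ map (\<lambda>k. k + n) [0..<n]"
    using upt_add_eq_append[of 0 n n] map_add_upt[of n n] by (simp add: mult_2)
  have L: "map (mu n a b) [0..<2*n] =
      map (\<lambda>k. circ_eig n s k + complex_of_real (if k = 0 then t1 else if k = m + 1 then \<epsilon> * t1 else 0)) [0..<n]
       @ map (\<lambda>k. circ_eig n c k + complex_of_real (if k = 0 then t2 else if k = m + 1 then \<epsilon> * t2 else 0)) [0..<n]"
    unfolding upt using mu1 mu2 by simp
  have "has_spectrum M (map (mu n a b) [0..<2*n])"
    unfolding has_spectrum_def M_def charpoly_Mm[OF n0] by (simp add: comp_def)
  hence "has_spectrum M (map (\<lambda>k. circ_eig n s k + complex_of_real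
                 (if k = 0 then t1 else if k = m + 1 then \<epsilon> * t1 else 0)) [0..<n]
       @ map (\<lambda>k. circ_eig n c k + complex_of_real
                 (if k = 0 then t2 else if k = m + 1 then \<epsilon> * t2 else 0)) [0..<n])"
    unfolding L .
  moreover have "M \<in> carrier_mat (2 * n) (2 * n)" unfolding M_def Mm_def by simp
  moreover have "nonneg_mat M" unfolding M_def by (rule nonneg_Mm[OF a0 b0 n0])
  moreover have "permutative M" unfolding M_def by (rule permutative_Mm[OF n0])
  ultimately show ?thesis by blast
qed

end
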